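(* Let $n\ge3$ and let $(\mathcal P,\mathcal M,p)$ be an operational theory containing binary measurements $M_1,\dots,M_n$ (outcomes $X_i\in\{0,1\}$) and two families of four-outcome measurements $M_{ij}$ and $M'_{ij}$, for $i\in\{1,\dots,n\}$ and $j=i+1\bmod n$, with outcomes $(X_i,X_j)$, each being a joint measurement of $M_i$ and $M_j$: for every $i$, $M_i^{(i-1)}\simeq M_i^{(i+1)}\simeq M_i$ and $M_i'^{(i-1)}\simeq M_i'^{(i+1)}\simeq M_i$ (indices modulo $n$). Let $P_*,P_*^\perp,P_i,P_i^\perp\in\mathcal P$ ($i=1,\dots,n$), let $P_x^{(\mathrm{ave})}$ implement $P_x$ or $P_x^\perp$ with probability $\tfrac12$ each, and suppose $P_*^{(\mathrm{ave})}\simeq P_1^{(\mathrm{ave})}\simeq\cdots\simeq P_n^{(\mathrm{ave})}$. Define $p(\mathrm{anti}|M_*,P)=\tfrac1n\sum_{i=1}^np(X_i\neq X_{i+1}|M_{i,i+1},P)$ (indices mod $n$), $p(\mathrm{chained}|M_*,P)=\tfrac1n\sum_{i=1}^{n-1}p(X_i=X_{i+1}|M_{i,i+1},P)+\tfrac1n p(X_n\neq X_1|M_{n1},P)$, the analogous quantities for $M'_*$ using $M'_{ij}$, and $\eta_{\mathrm{ave}}=\tfrac1{2n}\sum_{i=1}^n(\eta(M_i,P_i)+\eta(M_i,P_i^\perp))$. If the theory admits an ontological model that is both measurement and preparation noncontextual, then for odd $n\ge3$ $$p(\mathrm{anti}|M_*,P_* )+p(\mathrm{anti}|M'_*,P_*^\perp)\le2\Big(1-\tfrac1n\eta_{\mathrm{ave}}\Big),$$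 and for even $n\ge4$ $$p(\mathrm{chained}|M_*,P_* )+p(\mathrm{chained}|M'_*,P_*^\perp)\le2\Big(1-\tfrac1n\eta_{\mathrm{ave}}\Big).$$ Moreover, using only the equivalences for the $M_{ij}$ and the preparation equivalences, for odd $n$: $p(\mathrm{anti}|M_*,P_* )+p(\mathrm{anti}|M_*,P_*^\perp)\le2(1-\tfrac1n\eta_{\mathrm{ave}})$ and $p(\mathrm{anti}|M_*,P_* )\le\tfrac{n-1}{n}+\tfrac{2(1-\eta_{\mathrm{ave}})}{n}$; and for even $n$: $p(\mathrm{chained}|M_*,P_* )+p(\mathrm{chained}|M_*,P_*^\perp)\le2(1-\tfrac1n\eta_{\mathrm{ave}})$ and $p(\mathrm{chained}|M_*,P_* )\le\tfrac{n-1}{n}+\tfrac{2(1-\eta_{\mathrm{ave}})}{n}$.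
   Context: Operational theory: preparations, measurements with finite outcome sets, probabilities $p(X|M,P)$. Ontological model: ontic states $\Lambda$, distributions $\mu(\cdot|P)$, response functions $\xi(X|M,\lambda)$ with $p(X|M,P)=\sum_\lambda\xi(X|M,\lambda)\mu(\lambda|P)$; mixtures of preparations are represented by mixtures of distributions and coarse-grainings of outcomes by sums of response functions. $M_i^{(j)}$ is the binary measurement obtained from the joint measurement of $M_i$ and $M_j$ by discarding $X_j$ (for $j=i-1$ this means the measurement $M_{i-1,i}$), similarly for primed measurements. $\simeq$ denotes operational equivalence: measurements giving the same statistics on all preparations, preparations giving the same statistics for all measurements. Measurement noncontextuality: operationally equivalent measurement events have equal response functions for all $\lambda$; preparation noncontextuality: equivalent preparations have equal $\mu(\cdot|P)$. The predictability is $\eta(M,P)=2\max_{X\in\{0,1\}}p(X|M,P)-1$. Outcome determinism is not assumed. *)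

theory Defs
  imports "HOL-Probability.Probability"
begin

(* Operational theory: measurements 'm with finite outcome sets outs M (outcomes labelled
   by naturals), preparations 'p, probabilities prob M x P = p(x|M,P).
   mix w P Q : preparation implementing P with prob. w and Q with prob. 1-w.
   coarse f M : coarse-graining of M by relabelling outcome x to f x. *)
definition op_theory ::
  "('m \<Rightarrow> nat set) \<Rightarrow> ('m \<Rightarrow> nat \<Rightarrow> 'p \<Rightarrow> real) \<Rightarrow>
   (real \<Rightarrow> 'p \<Rightarrow> 'p \<Rightarrow> 'p) \<Rightarrow> ((nat \<Rightarrow> nat) \<Rightarrow> 'm \<Rightarrow> 'm) \<Rightarrow> bool" where
  "op_theory outs prob mix coarse \<longleftrightarrow>
     (\<forall>M. finite (outs M) \<and> outs M \<noteq> {}) \<and>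
     (\<forall>M x P. 0 \<le> prob M x P) \<and>
     (\<forall>M x P. x \<notin> outs M \<longrightarrow> prob M x P = 0) \<and>
     (\<forall>M P. (\<Sum>x\<in>outs M. prob M x P) = 1) \<and>
     (\<forall>w P Q M x. 0 \<le> w \<and> w \<le> 1 \<longrightarrow>
        prob M x (mix w P Q) = w * prob M x P + (1 - w) * prob M x Q) \<and>
     (\<forall>f M. outs (coarse f M) = f ` outs M) \<and>
     (\<forall>f M x P. prob (coarse f M) x P = (\<Sum>y\<in>{y\<in>outs M. f y = x}. prob M y P))"

(* Ontological model with (discrete) ontic state space 'l: distributions mu P,
   response functions xi M x l = xi(x|M,lambda). *)
definition ont_model ::
  "('m \<Rightarrow> nat set) \<Rightarrow> ('m \<Rightarrow> nat \<Rightarrow> 'p \<Rightarrow> real) \<Rightarrow>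
   (real \<Rightarrow> 'p \<Rightarrow> 'p \<Rightarrow> 'p) \<Rightarrow> ((nat \<Rightarrow> nat) \<Rightarrow> 'm \<Rightarrow> 'm) \<Rightarrow>
   ('p \<Rightarrow> 'l pmf) \<Rightarrow> ('m \<Rightarrow> nat \<Rightarrow> 'l \<Rightarrow> real) \<Rightarrow> bool" where
  "ont_model outs prob mix coarse \<mu> \<xi> \<longleftrightarrow>
     (\<forall>M x l. 0 \<le> \<xi> M x l) \<and>
     (\<forall>M x l. x \<notin> outs M \<longrightarrow> \<xi> M x l = 0) \<and>
     (\<forall>M l. (\<Sum>x\<in>outs M. \<xi> M x l) = 1) \<and>
     (\<forall>M x P. prob M x P = measure_pmf.expectation (\<mu> P) (\<xi> M x)) \<and>
     (\<forall>w P Q l. 0 \<le> w \<and> w \<le> 1 \<longrightarrow>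
        pmf (\<mu> (mix w P Q)) l = w * pmf (\<mu> P) l + (1 - w) * pmf (\<mu> Q) l) \<and>
     (\<forall>f M x l. \<xi> (coarse f M) x l = (\<Sum>y\<in>{y\<in>outs M. f y = x}. \<xi> M y l))"

definition meas_event_equiv :: "('m \<Rightarrow> nat \<Rightarrow> 'p \<Rightarrow> real) \<Rightarrow> 'm \<Rightarrow> nat \<Rightarrow> 'm \<Rightarrow> nat \<Rightarrow> bool" where
  "meas_event_equiv prob M x N y \<longleftrightarrow> (\<forall>P. prob M x P = prob N y P)"

definition meas_equiv :: "('m \<Rightarrow> nat set) \<Rightarrow> ('m \<Rightarrow> nat \<Rightarrow> 'p \<Rightarrow> real) \<Rightarrow> 'm \<Rightarrow> 'm \<Rightarrow> bool" where
  "meas_equiv outs prob M N \<longleftrightarrow> outs M = outs N \<and> (\<forall>x. meas_event_equiv prob M x N x)"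

definition prep_equiv :: "('m \<Rightarrow> nat \<Rightarrow> 'p \<Rightarrow> real) \<Rightarrow> 'p \<Rightarrow> 'p \<Rightarrow> bool" where
  "prep_equiv prob P Q \<longleftrightarrow> (\<forall>M x. prob M x P = prob M x Q)"

definition meas_nc :: "('m \<Rightarrow> nat \<Rightarrow> 'p \<Rightarrow> real) \<Rightarrow> ('m \<Rightarrow> nat \<Rightarrow> 'l \<Rightarrow> real) \<Rightarrow> bool" where
  "meas_nc prob \<xi> \<longleftrightarrow>
     (\<forall>M x N y. meas_event_equiv prob M x N y \<longrightarrow> (\<forall>l. \<xi> M x l = \<xi> N y l))"

definition prep_nc :: "('m \<Rightarrow> nat \<Rightarrow> 'p \<Rightarrow> real) \<Rightarrow> ('p \<Rightarrow> 'l pmf) \<Rightarrow> bool" where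
  "prep_nc prob \<mu> \<longleftrightarrow> (\<forall>P Q. prep_equiv prob P Q \<longrightarrow> \<mu> P = \<mu> Q)"

(* cyclic indices on {1..n} *)
definition nxt :: "nat \<Rightarrow> nat \<Rightarrow> nat" where "nxt n i = i mod n + 1"
definition prv :: "nat \<Rightarrow> nat \<Rightarrow> nat" where "prv n i = (i + n - 2) mod n + 1"

(* outcome (X_i, X_j) of a joint measurement M_ij is encoded as 2*X_i + X_j *)
definition enc :: "nat \<Rightarrow> nat \<Rightarrow> nat" where "enc a b = 2 * a + b"

(* Mj i = M_{i,i+1} is a joint measurement of Mb i and Mb (i+1):
   discarding X_{i+1} gives M_i^{(i+1)} ~ M_i, and for M_{i-1,i} discarding X_{i-1}
   gives M_i^{(i-1)} ~ M_i. *)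
definition joint_meas ::
  "('m \<Rightarrow> nat set) \<Rightarrow> ('m \<Rightarrow> nat \<Rightarrow> 'p \<Rightarrow> real) \<Rightarrow> ((nat \<Rightarrow> nat) \<Rightarrow> 'm \<Rightarrow> 'm) \<Rightarrow>
   (nat \<Rightarrow> 'm) \<Rightarrow> (nat \<Rightarrow> 'm) \<Rightarrow> nat \<Rightarrow> bool" where
  "joint_meas outs prob coarse Mb Mj n \<longleftrightarrow>
     (\<forall>i\<in>{1..n}.
        outs (Mj i) = {enc a b | a b. a \<in> {0,1} \<and> b \<in> {0,1}} \<and>
        meas_equiv outs prob (coarse (\<lambda>x. x div 2) (Mj i)) (Mb i) \<and>
        meas_equiv outs prob (coarse (\<lambda>x. x mod 2) (Mj (prv n i))) (Mb i))"

definition p_neq :: "('m \<Rightarrow> nat \<Rightarrow> 'p \<Rightarrow> real) \<Rightarrow> 'm \<Rightarrow> 'p \<Rightarrow> real" where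
  "p_neq prob M P = prob M (enc 0 1) P + prob M (enc 1 0) P"

definition p_eq :: "('m \<Rightarrow> nat \<Rightarrow> 'p \<Rightarrow> real) \<Rightarrow> 'm \<Rightarrow> 'p \<Rightarrow> real" where
  "p_eq prob M P = prob M (enc 0 0) P + prob M (enc 1 1) P"

definition p_anti :: "('m \<Rightarrow> nat \<Rightarrow> 'p \<Rightarrow> real) \<Rightarrow> (nat \<Rightarrow> 'm) \<Rightarrow> nat \<Rightarrow> 'p \<Rightarrow> real" where
  "p_anti prob Mj n P = (1 / real n) * (\<Sum>i=1..n. p_neq prob (Mj i) P)"

definition p_chained :: "('m \<Rightarrow> nat \<Rightarrow> 'p \<Rightarrow> real) \<Rightarrow> (nat \<Rightarrow> 'm) \<Rightarrow> nat \<Rightarrow> 'p \<Rightarrow> real" where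
  "p_chained prob Mj n P =
     (1 / real n) * (\<Sum>i=1..n-1. p_eq prob (Mj i) P) + (1 / real n) * p_neq prob (Mj n) P"

definition eta :: "('m \<Rightarrow> nat \<Rightarrow> 'p \<Rightarrow> real) \<Rightarrow> 'm \<Rightarrow> 'p \<Rightarrow> real" where
  "eta prob M P = 2 * max (prob M 0 P) (prob M 1 P) - 1"

definition eta_ave ::
  "('m \<Rightarrow> nat \<Rightarrow> 'p \<Rightarrow> real) \<Rightarrow> (nat \<Rightarrow> 'm) \<Rightarrow> (nat \<Rightarrow> 'p) \<Rightarrow> (nat \<Rightarrow> 'p) \<Rightarrow> nat \<Rightarrow> real" where
  "eta_ave prob Mb Px Pxp n =
     (1 / (2 * real n)) * (\<Sum>i=1..n. eta prob (Mb i) (Px i) + eta prob (Mb i) (Pxp i))"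

end

theory Submission
  imports Defs
begin


lemma intb: "(\<And>l. \<bar>g l\<bar> \<le> B) \<Longrightarrow> integrable (measure_pmf p) (g :: 'a \<Rightarrow> real)"
  by (rule measure_pmf.integrable_const_bound[where B=B]) auto

lemma exp_dens: "measure_pmf.expectation p (g::'a\<Rightarrow>real) = integral\<^sup>L (count_space UNIV) (\<lambda>x. pmf p x * g x)"
  by (simp add: measure_pmf_eq_density integral_density pmf_nonneg)

lemma int_dens: assumes "\<And>l. \<bar>g l\<bar> \<le> B"
  shows "integrable (count_space UNIV) (\<lambda>x. pmf p x * (g x::real))"
proof -
  have "integrable (measure_pmf p) g" using intb assms by blast
  then show ?thesis by (simp add: measure_pmf_eq_density integrable_density pmf_nonneg)
qed

lemma exp_mix:
  assumes "\<forall>l. pmf r l = 1/2 * pmf p l + (1 - 1/2) * pmf q l" and b: "\<And>l. \<bar>g l\<bar> \<le> B"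
  shows "measure_pmf.expectation r g = (measure_pmf.expectation p g + measure_pmf.expectation q (g::'a\<Rightarrow>real))/2"
proof -
  have ip: "integrable (count_space UNIV) (\<lambda>x. pmf p x * g x)" using int_dens b by blast
  have iq: "integrable (count_space UNIV) (\<lambda>x. pmf q x * g x)" using int_dens b by blast
  have "(\<lambda>x. pmf r x * g x) = (\<lambda>x. 1/2 * (pmf p x * g x) + 1/2 * (pmf q x * g x))"
    using assms(1) by (auto simp: algebra_simps)
  then have "measure_pmf.expectation r g = integral\<^sup>L (count_space UNIV) (\<lambda>x. 1/2 * (pmf p x * g x) + 1/2 * (pmf q x * g x))"
    by (simp add: exp_dens)
  also have "\<dots> = 1/2 * integral\<^sup>L (count_space UNIV) (\<lambda>x. pmf p x * g x) + 1/2 * integral\<^sup>L (count_space UNIV) (\<lambda>x. pmf q x * g x)"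
    using ip iq by simp
  finally show ?thesis by (simp add: exp_dens)
qed

lemma edge:
  fixes q0 q1 q2 q3 x y :: real
  assumes "q0+q1 = x" "q0+q2 = y" "q0+q1+q2+q3=1" "q0\<ge>0" "q1\<ge>0" "q2\<ge>0" "q3\<ge>0"
  shows "q1+q2 \<le> 1 - \<bar>(2*x-1) + (2*y-1)\<bar>/2" "q0+q3 \<le> 1 - \<bar>(2*x-1) - (2*y-1)\<bar>/2"
proof -
  have "\<bar>(2*x-1) + (2*y-1)\<bar> \<le> 2 - 2*(q1+q2)" using assms by (smt (verit))
  then show "q1+q2 \<le> 1 - \<bar>(2*x-1) + (2*y-1)\<bar>/2" by (simp add: field_simps)
  have "\<bar>(2*x-1) - (2*y-1)\<bar> \<le> 2 - 2*(q0+q3)" using assms by (smt (verit))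
  then show "q0+q3 \<le> 1 - \<bar>(2*x-1) - (2*y-1)\<bar>/2" by (simp add: field_simps)
qed

lemma alt_tel: "(\<Sum>i=1..<Suc m. (-1)^(i-1) * (c i + c (Suc i))) = c 1 - (-1::real)^m * c (Suc m)"
  by (induction m) (auto simp: algebra_simps)

lemma tel: "(\<Sum>i=1..<Suc m. (c i - c (Suc i))) = c 1 - (c (Suc m)::real)"
  by (induction m) (auto simp: algebra_simps)

lemma nxt_lt: "1 \<le> i \<Longrightarrow> i < n \<Longrightarrow> nxt n i = Suc i" by (simp add: nxt_def)
lemma nxt_n: "n \<ge> 1 \<Longrightarrow> nxt n n = 1" by (simp add: nxt_def)

lemma odd_cyc:
  fixes c :: "nat \<Rightarrow> real"
  assumes "odd n" "j \<in> {1..n}"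
  shows "2 * \<bar>c j\<bar> \<le> (\<Sum>i=1..n. \<bar>c i + c (nxt n i)\<bar>)"
proof -
  define e where "e i = (-1::real)^(i-1) * (c i + c (nxt n i))" for i
  have n1: "n \<ge> 1" using assms by auto
  obtain k where k: "j = Suc k" using assms by (cases j) auto
  obtain m where m: "n = Suc m" using n1 by (cases n) auto
  have A: "(\<Sum>i=1..<j. e i) = c 1 - (-1)^k * c j"
  proof -
    have "(\<Sum>i=1..<j. e i) = (\<Sum>i=1..<Suc k. (-1)^(i-1) * (c i + c (Suc i)))"
      unfolding e_def k using assms k by (intro sum.cong) (auto simp: nxt_lt)
    then show ?thesis using alt_tel[of c k] k by simp
  qed
  have T0: "(\<Sum>i=1..<n. e i) = c 1 - (-1)^m * c n"
  proof -
    have "(\<Sum>i=1..<n. e i) = (\<Sum>i=1..<Suc m. (-1)^(i-1) * (c i + c (Suc i)))"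
      unfolding e_def m using assms m by (intro sum.cong) (auto simp: nxt_lt)
    then show ?thesis using alt_tel[of c m] m by simp
  qed
  have ev: "(-1::real)^m = 1" using assms m by simp
  have T: "(\<Sum>i=1..<Suc n. e i) = 2 * c 1"
    using T0 ev n1 by (simp add: e_def nxt_n m)
  have spl: "(\<Sum>i=1..<Suc n. e i) = (\<Sum>i=1..<j. e i) + (\<Sum>i=j..<Suc n. e i)"
    using assms by (simp add: sum.atLeastLessThan_concat)
  have spl2: "(\<Sum>i=1..<Suc n. \<bar>e i\<bar>) = (\<Sum>i=1..<j. \<bar>e i\<bar>) + (\<Sum>i=j..<Suc n. \<bar>e i\<bar>)"
    using assms by (simp add: sum.atLeastLessThan_concat)
  have ab: "\<bar>e i\<bar> = \<bar>c i + c (nxt n i)\<bar>" for i by (simp add: e_def abs_mult)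
  have "2 * \<bar>c j\<bar> = \<bar>(\<Sum>i=j..<Suc n. e i) - (\<Sum>i=1..<j. e i)\<bar>"
  proof -
    have "(\<Sum>i=j..<Suc n. e i) - (\<Sum>i=1..<j. e i) = 2 * (-1)^k * c j"
      using T spl A by simp
    then show ?thesis by (simp add: abs_mult)
  qed
  also have "\<dots> \<le> \<bar>\<Sum>i=j..<Suc n. e i\<bar> + \<bar>\<Sum>i=1..<j. e i\<bar>" by (rule abs_triangle_ineq4)
  also have "\<dots> \<le> (\<Sum>i=j..<Suc n. \<bar>e i\<bar>) + (\<Sum>i=1..<j. \<bar>e i\<bar>)"
    by (intro add_mono sum_abs)
  also have "\<dots> = (\<Sum>i=1..n. \<bar>c i + c (nxt n i)\<bar>)"
    using spl2 ab by (simp add: atLeastLessThanSuc_atLeastAtMost)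
  finally show ?thesis .
qed

lemma chain_cyc:
  fixes c :: "nat \<Rightarrow> real"
  assumes "j \<in> {1..n}"
  shows "2 * \<bar>c j\<bar> \<le> (\<Sum>i=1..n-1. \<bar>c i - c (Suc i)\<bar>) + \<bar>c n + c 1\<bar>"
proof -
  define e where "e i = (if i = n then c n + c 1 else c i - c (Suc i))" for i
  have n1: "n \<ge> 1" using assms by auto
  obtain k where k: "j = Suc k" using assms by (cases j) auto
  obtain m where m: "n = Suc m" using n1 by (cases n) auto
  have A: "(\<Sum>i=1..<j. e i) = c 1 - c j"
  proof -
    have "(\<Sum>i=1..<j. e i) = (\<Sum>i=1..<Suc k. (c i - c (Suc i)))"
      unfolding e_def k using assms k by (intro sum.cong) auto
    then show ?thesis using tel[of c k] k by simp
  qed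
  have T0: "(\<Sum>i=1..<n. e i) = c 1 - c n"
  proof -
    have "(\<Sum>i=1..<n. e i) = (\<Sum>i=1..<Suc m. (c i - c (Suc i)))"
      unfolding e_def m by (intro sum.cong) auto
    then show ?thesis using tel[of c m] m by simp
  qed
  have T: "(\<Sum>i=1..<Suc n. e i) = 2 * c 1"
    using T0 n1 by (simp add: e_def)
  have spl: "(\<Sum>i=1..<Suc n. e i) = (\<Sum>i=1..<j. e i) + (\<Sum>i=j..<Suc n. e i)"
    using assms by (simp add: sum.atLeastLessThan_concat)
  have spl2: "(\<Sum>i=1..<Suc n. \<bar>e i\<bar>) = (\<Sum>i=1..<j. \<bar>e i\<bar>) + (\<Sum>i=j..<Suc n. \<bar>e i\<bar>)"
    using assms by (simp add: sum.atLeastLessThan_concat)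
  have tot: "(\<Sum>i=1..<Suc n. \<bar>e i\<bar>) = (\<Sum>i=1..n-1. \<bar>c i - c (Suc i)\<bar>) + \<bar>c n + c 1\<bar>"
  proof -
    have "(\<Sum>i=1..<Suc n. \<bar>e i\<bar>) = (\<Sum>i=1..<n. \<bar>e i\<bar>) + \<bar>e n\<bar>" using n1 by simp
    moreover have "(\<Sum>i=1..<n. \<bar>e i\<bar>) = (\<Sum>i=1..n-1. \<bar>c i - c (Suc i)\<bar>)"
      using m by (intro sum.cong) (auto simp: e_def)
    ultimately show ?thesis by (simp add: e_def)
  qed
  have "2 * \<bar>c j\<bar> = \<bar>(\<Sum>i=j..<Suc n. e i) - (\<Sum>i=1..<j. e i)\<bar>"
  proof -
    have "(\<Sum>i=j..<Suc n. e i) - (\<Sum>i=1..<j. e i) = 2 * c j"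
      using T spl A by simp
    then show ?thesis by (simp add: abs_mult)
  qed
  also have "\<dots> \<le> \<bar>\<Sum>i=j..<Suc n. e i\<bar> + \<bar>\<Sum>i=1..<j. e i\<bar>" by (rule abs_triangle_ineq4)
  also have "\<dots> \<le> (\<Sum>i=j..<Suc n. \<bar>e i\<bar>) + (\<Sum>i=1..<j. \<bar>e i\<bar>)"
    by (intro add_mono sum_abs)
  also have "\<dots> = (\<Sum>i=1..n-1. \<bar>c i - c (Suc i)\<bar>) + \<bar>c n + c 1\<bar>"
    using spl2 tot by simp
  finally show ?thesis .
qed

lemma odd_pt:
  fixes N c :: "nat \<Rightarrow> real"
  assumes "odd n" "\<forall>i\<in>{1..n}. N i \<le> 1 - \<bar>c i + c (nxt n i)\<bar>/2"
  shows "real n * (\<Sum>i=1..n. N i) \<le> real n * real n - (\<Sum>j=1..n. \<bar>c j\<bar>)"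
proof -
  have "(\<Sum>i=1..n. N i) \<le> real n - \<bar>c j\<bar>" if j: "j \<in> {1..n}" for j
  proof -
    have "(\<Sum>i=1..n. N i) \<le> (\<Sum>i=1..n. 1 - \<bar>c i + c (nxt n i)\<bar>/2)"
      using assms(2) by (intro sum_mono) auto
    also have "\<dots> = real n - (\<Sum>i=1..n. \<bar>c i + c (nxt n i)\<bar>)/2"
      by (simp add: sum_subtractf sum_divide_distrib)
    finally show ?thesis using odd_cyc[OF assms(1) j, of c] by (simp add: field_simps)
  qed
  then have "(\<Sum>j=1..n. (\<Sum>i=1..n. N i)) \<le> (\<Sum>j=1..n. real n - \<bar>c j\<bar>)"
    by (intro sum_mono) auto
  then show ?thesis by (simp add: sum_subtractf)
qed

lemma chain_pt:
  fixes N c :: "nat \<Rightarrow> real"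
  assumes "n \<ge> 1" "\<forall>i\<in>{1..n-1}. N i \<le> 1 - \<bar>c i - c (Suc i)\<bar>/2"
    "L \<le> 1 - \<bar>c n + c 1\<bar>/2"
  shows "real n * ((\<Sum>i=1..n-1. N i) + L) \<le> real n * real n - (\<Sum>j=1..n. \<bar>c j\<bar>)"
proof -
  have "(\<Sum>i=1..n-1. N i) + L \<le> real n - \<bar>c j\<bar>" if j: "j \<in> {1..n}" for j
  proof -
    have "(\<Sum>i=1..n-1. N i) \<le> (\<Sum>i=1..n-1. 1 - \<bar>c i - c (Suc i)\<bar>/2)"
      using assms(2) by (intro sum_mono) auto
    also have "\<dots> = real (n-1) - (\<Sum>i=1..n-1. \<bar>c i - c (Suc i)\<bar>)/2"
      by (simp add: sum_subtractf sum_divide_distrib)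
    finally have "(\<Sum>i=1..n-1. N i) + L \<le> real (n-1) + 1 - ((\<Sum>i=1..n-1. \<bar>c i - c (Suc i)\<bar>) + \<bar>c n + c 1\<bar>)/2"
      using assms(3) by (simp add: field_simps)
    moreover have "real (n-1) = real n - 1" using assms(1) by simp
    ultimately show ?thesis using chain_cyc[OF j, of c] by (simp add: field_simps)
  qed
  then have "(\<Sum>j=1..n. (\<Sum>i=1..n-1. N i) + L) \<le> (\<Sum>j=1..n. real n - \<bar>c j\<bar>)"
    by (intro sum_mono) auto
  then show ?thesis by (simp add: sum_subtractf)
qed

lemma encset: "{enc a b |a b. a \<in> {0,1} \<and> b \<in> {0,1}} = {0,1,2,3::nat}"
proof
  show "{enc a b |a b. a \<in> {0,1} \<and> b \<in> {0,1}} \<subseteq> {0,1,2,3::nat}" by (auto simp: enc_def)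
  have m: "enc a b \<in> {enc a b |a b. a \<in> {0,1} \<and> b \<in> {0,1}}" if "a\<in>{0,1}" "b\<in>{0,1}" for a b
    using that by blast
  have "enc 0 0 = 0" "enc 0 1 = 1" "enc 1 0 = 2" "enc 1 1 = 3" by (simp_all add: enc_def)
  then show "{0,1,2,3::nat} \<subseteq> {enc a b |a b. a \<in> {0,1} \<and> b \<in> {0,1}}"
    using m[of 0 0] m[of 0 1] m[of 1 0] m[of 1 1] by simp
qed
lemma prv_nxt: "i \<in> {1..n} \<Longrightarrow> prv n (nxt n i) = i"
proof -
  assume i: "i \<in> {1..n}"
  show ?thesis
  proof (cases "i = n")
    case True
    have a: "nxt n i = 1" using True i by (simp add: nxt_def)
    have b: "1 + n - 2 = n - 1" using i by auto
    have c: "(n - 1) mod n = n - 1" using i by simp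
    show ?thesis unfolding prv_def a b c using True i by simp
  next
    case False
    then have "i < n" using i by auto
    then have a: "nxt n i = i + 1" by (simp add: nxt_def)
    have b: "i + 1 + n - 2 = (i - 1) + n" using i by auto
    have c: "((i - 1) + n) mod n = i - 1" using \<open>i < n\<close> by simp
    show ?thesis unfolding prv_def a b c using i by simp
  qed
qed

lemma nxt_in: "i \<in> {1..n} \<Longrightarrow> nxt n i \<in> {1..n}"
proof -
  assume "i \<in> {1..n}"
  then have "n > 0" by auto
  then have "i mod n < n" by simp
  then show ?thesis by (simp add: nxt_def)
qed
lemma jfacts:
  assumes model: "ont_model outs prob mix coarse \<mu> \<xi>" and mnc: "meas_nc prob \<xi>"
    and jm: "joint_meas outs prob coarse Mb J n" and i: "i \<in> {1..n}"
  shows "\<xi> (J i) 0 l + \<xi> (J i) 1 l = \<xi> (Mb i) 0 l"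
    "\<xi> (J i) 0 l + \<xi> (J i) 2 l = \<xi> (Mb (nxt n i)) 0 l"
    "\<xi> (J i) 0 l + \<xi> (J i) 1 l + \<xi> (J i) 2 l + \<xi> (J i) 3 l = 1"
proof -
  have co: "\<And>f M x l. \<xi> (coarse f M) x l = (\<Sum>y\<in>{y\<in>outs M. f y = x}. \<xi> M y l)"
    and su: "\<And>M l. (\<Sum>x\<in>outs M. \<xi> M x l) = 1"
    using model unfolding ont_model_def by blast+
  have o: "outs (J k) = {0,1,2,3}" if "k \<in> {1..n}" for k
    using jm that encset unfolding joint_meas_def by auto
  have s1: "{y\<in>{0,1,2,3::nat}. y div 2 = 0} = {0,1}" by auto
  have s2: "{y\<in>{0,1,2,3::nat}. y mod 2 = 0} = {0,2}" by auto
  have "meas_event_equiv prob (coarse (\<lambda>x. x div 2) (J i)) 0 (Mb i) 0"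
    using jm i unfolding joint_meas_def meas_equiv_def by auto
  then have "\<xi> (coarse (\<lambda>x. x div 2) (J i)) 0 l = \<xi> (Mb i) 0 l"
    using mnc unfolding meas_nc_def by blast
  then show "\<xi> (J i) 0 l + \<xi> (J i) 1 l = \<xi> (Mb i) 0 l"
    using co[of "\<lambda>x. x div 2" "J i" 0 l] o[OF i] s1 by simp
  have i2: "nxt n i \<in> {1..n}" using nxt_in i by blast
  have "meas_event_equiv prob (coarse (\<lambda>x. x mod 2) (J (prv n (nxt n i)))) 0 (Mb (nxt n i)) 0"
    using jm i2 unfolding joint_meas_def meas_equiv_def by auto
  then have "\<xi> (coarse (\<lambda>x. x mod 2) (J i)) 0 l = \<xi> (Mb (nxt n i)) 0 l"
    using mnc prv_nxt[OF i] unfolding meas_nc_def by metis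
  then show "\<xi> (J i) 0 l + \<xi> (J i) 2 l = \<xi> (Mb (nxt n i)) 0 l"
    using co[of "\<lambda>x. x mod 2" "J i" 0 l] o[OF i] s2 by simp
  show "\<xi> (J i) 0 l + \<xi> (J i) 1 l + \<xi> (J i) 2 l + \<xi> (J i) 3 l = 1"
    using su[of "J i" l] o[OF i] by (simp add: add.assoc)
qed



lemma fin1: fixes A B X Y ea :: real
  assumes "n > 0" "n*A \<le> n*n - X" "n*B \<le> n*n - Y" "X+Y \<ge> 2*n*ea"
  shows "(1/n)*A + (1/n)*B \<le> 2*(1 - ea/n)"
proof -
  have "n*(A+B) \<le> n*(2*n-2*ea)" using assms by (simp add: algebra_simps)
  then have "A+B \<le> 2*n-2*ea" using assms(1) by (simp add: mult_le_cancel_left_pos)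
  then have "(A+B)/n \<le> (2*n-2*ea)/n" using assms(1) by (intro divide_right_mono) auto
  moreover have "(1/n)*A + (1/n)*B = (A+B)/n" by (simp add: add_divide_distrib)
  moreover have "2*(1 - ea/n) = (2*n-2*ea)/n" using assms(1) by (simp add: field_simps)
  ultimately show ?thesis by simp
qed
lemma fin2: fixes A X Y ea :: real
  assumes "n > 0" "n*A \<le> n*n - X" "X+Y \<ge> 2*n*ea" "Y \<le> n"
  shows "(1/n)*A \<le> (n-1)/n + 2*(1-ea)/n"
proof -
  have "n*A \<le> n*(n+1-2*ea)" using assms by (simp add: algebra_simps)
  then have "A \<le> n+1-2*ea" using assms(1) by (simp add: mult_le_cancel_left_pos)
  then have "A/n \<le> (n+1-2*ea)/n" using assms(1) by (intro divide_right_mono) auto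
  moreover have "(n-1)/n + 2*(1-ea)/n = (n+1-2*ea)/n" using assms(1) by (simp add: field_simps)
  ultimately show ?thesis by simp
qed
theorem mainTheorem10:
  fixes outs :: "'m \<Rightarrow> nat set" and prob :: "'m \<Rightarrow> nat \<Rightarrow> 'p \<Rightarrow> real"
    and mix :: "real \<Rightarrow> 'p \<Rightarrow> 'p \<Rightarrow> 'p" and coarse :: "(nat \<Rightarrow> nat) \<Rightarrow> 'm \<Rightarrow> 'm"
    and Mb Mj Mj' :: "nat \<Rightarrow> 'm"
    and Ps Psp :: 'p and Px Pxp :: "nat \<Rightarrow> 'p"
    and n :: nat
    and \<mu> :: "'p \<Rightarrow> 'l pmf" and \<xi> :: "'m \<Rightarrow> nat \<Rightarrow> 'l \<Rightarrow> real"
  assumes opth: "op_theory outs prob mix coarse"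
    and n3: "n \<ge> 3"
    and binary: "\<forall>i\<in>{1..n}. outs (Mb i) = {0, 1}"
    and jointM: "joint_meas outs prob coarse Mb Mj n"
    and prep: "\<forall>i\<in>{1..n}. prep_equiv prob (mix (1/2) Ps Psp) (mix (1/2) (Px i) (Pxp i))"
    and model: "ont_model outs prob mix coarse \<mu> \<xi>"
    and mnc: "meas_nc prob \<xi>"
    and pnc: "prep_nc prob \<mu>"
  shows
    "(joint_meas outs prob coarse Mb Mj' n \<longrightarrow>
        (odd n \<longrightarrow> p_anti prob Mj n Ps + p_anti prob Mj' n Psp
                     \<le> 2 * (1 - eta_ave prob Mb Px Pxp n / real n)) \<and>
        (even n \<longrightarrow> p_chained prob Mj n Ps + p_chained prob Mj' n Psp
                     \<le> 2 * (1 - eta_ave prob Mb Px Pxp n / real n))) \<and>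
     (odd n \<longrightarrow>
        p_anti prob Mj n Ps + p_anti prob Mj n Psp \<le> 2 * (1 - eta_ave prob Mb Px Pxp n / real n) \<and>
        p_anti prob Mj n Ps \<le> (real n - 1) / real n + 2 * (1 - eta_ave prob Mb Px Pxp n) / real n) \<and>
     (even n \<longrightarrow>
        p_chained prob Mj n Ps + p_chained prob Mj n Psp \<le> 2 * (1 - eta_ave prob Mb Px Pxp n / real n) \<and>
        p_chained prob Mj n Ps \<le> (real n - 1) / real n + 2 * (1 - eta_ave prob Mb Px Pxp n) / real n)"
proof -
  note oo = opth[unfolded op_theory_def]
  note mo = model[unfolded ont_model_def]
  have O: "(\<forall>M. finite (outs M) \<and> outs M \<noteq> {})" "(\<forall>M P. (\<Sum>x\<in>outs M. prob M x P) = 1)"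
    using oo[THEN conjunct1] oo[THEN conjunct2, THEN conjunct2, THEN conjunct2, THEN conjunct1] by auto
  have fin: "\<And>M. finite (outs M)" using O(1) by blast
  have osum: "\<And>M P. (\<Sum>x\<in>outs M. prob M x P) = 1" using O(2) by blast
  note Mo = mo[THEN conjunct1] mo[THEN conjunct2, THEN conjunct1]
      mo[THEN conjunct2, THEN conjunct2, THEN conjunct1]
      mo[THEN conjunct2, THEN conjunct2, THEN conjunct2, THEN conjunct1]
      mo[THEN conjunct2, THEN conjunct2, THEN conjunct2, THEN conjunct2, THEN conjunct1]
  have xnn: "\<And>M x l. 0 \<le> \<xi> M x l" using Mo(1) by blast
  have xout: "\<And>M x l. x \<notin> outs M \<Longrightarrow> \<xi> M x l = 0" using Mo(2) by blast
  have xsum: "\<And>M l. (\<Sum>x\<in>outs M. \<xi> M x l) = 1" using Mo(3) by blast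
  have pE: "\<And>M x P. prob M x P = measure_pmf.expectation (\<mu> P) (\<xi> M x)" using Mo(4) by blast
  have pmix: "\<And>w P Q l. 0 \<le> w \<and> w \<le> 1 \<Longrightarrow>
        pmf (\<mu> (mix w P Q)) l = w * pmf (\<mu> P) l + (1 - w) * pmf (\<mu> Q) l" using Mo(5) by blast
  have xle: "\<xi> M x l \<le> 1" for M x l
  proof (cases "x \<in> outs M")
    case True
    then have "\<xi> M x l \<le> (\<Sum>y\<in>outs M. \<xi> M y l)" using fin xnn by (intro member_le_sum) auto
    then show ?thesis using xsum by simp
  qed (simp add: xout)
  have xab: "\<bar>\<xi> M x l\<bar> \<le> 1" for M x l using xle xnn by (simp add: abs_le_iff)
  have ixi: "integrable (measure_pmf (\<mu> P)) (\<xi> M x)" for M x P by (rule intb[where B=1]) (rule xab)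
  have n0: "real n > 0" using n3 by simp
  define c where "c j l = 2 * \<xi> (Mb j) 0 l - 1" for j l
  have cab: "\<bar>c j l\<bar> \<le> 1" for j l unfolding c_def using xnn[of "Mb j" 0 l] xle[of "Mb j" 0 l] by (simp add: abs_le_iff)
  have cab2: "\<bar>\<bar>c j l\<bar>\<bar> \<le> 1" for j l using cab by simp
  have ic: "integrable (measure_pmf (\<mu> P)) (\<lambda>l. \<bar>c j l\<bar>)" for j P by (rule intb[where B=1]) (rule cab2)
  define e where "e j P = measure_pmf.expectation (\<mu> P) (\<lambda>l. \<bar>c j l\<bar>)" for j P
  define D where "D l = (\<Sum>j=1..n. \<bar>c j l\<bar>)" for l
  have iD: "integrable (measure_pmf (\<mu> P)) D" for P unfolding D_def by (rule Bochner_Integration.integrable_sum, rule ic)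
  have ED: "measure_pmf.expectation (\<mu> P) D = (\<Sum>j=1..n. e j P)" for P
    unfolding D_def e_def by (rule Bochner_Integration.integral_sum, rule ic)
  have integ: "real n * measure_pmf.expectation (\<mu> P) F \<le> real n * real n - (\<Sum>j=1..n. e j P)"
    if iF: "integrable (measure_pmf (\<mu> P)) F" and pw: "\<And>l. real n * F l \<le> real n * real n - D l" for F P
  proof -
    have "measure_pmf.expectation (\<mu> P) (\<lambda>l. real n * F l) \<le> measure_pmf.expectation (\<mu> P) (\<lambda>l. real n * real n - D l)"
      using iF iD pw by (intro integral_mono) auto
    also have "\<dots> = real n * real n - measure_pmf.expectation (\<mu> P) D"
      using iD by (simp add: Bochner_Integration.integral_diff)
    finally show ?thesis using ED by simp
  qed
  have pw_edge: "\<xi> (J i) 1 l + \<xi> (J i) 2 l \<le> 1 - \<bar>c i l + c (nxt n i) l\<bar>/2 \<and>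
                 \<xi> (J i) 0 l + \<xi> (J i) 3 l \<le> 1 - \<bar>c i l - c (nxt n i) l\<bar>/2"
    if jm: "joint_meas outs prob coarse Mb J n" and i: "i \<in> {1..n}" for J i l
    using edge[OF jfacts(1,2,3)[OF model mnc jm i] xnn xnn xnn xnn] unfolding c_def by simp
  have fam_odd: "real n * (\<Sum>i=1..n. p_neq prob (J i) P) \<le> real n * real n - (\<Sum>j=1..n. e j P)"
    if jm: "joint_meas outs prob coarse Mb J n" and od: "odd n" for J P
  proof -
    define F where "F l = (\<Sum>i=1..n. \<xi> (J i) 1 l + \<xi> (J i) 2 l)" for l
    have iF: "integrable (measure_pmf (\<mu> P)) F" unfolding F_def by (intro Bochner_Integration.integrable_sum Bochner_Integration.integrable_add ixi)
    have EF: "measure_pmf.expectation (\<mu> P) F = (\<Sum>i=1..n. p_neq prob (J i) P)"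
      unfolding F_def p_neq_def using ixi
      by (simp add: Bochner_Integration.integral_sum Bochner_Integration.integral_add pE enc_def)
    have "real n * F l \<le> real n * real n - D l" for l
      unfolding F_def D_def
      by (rule odd_pt[OF od]) (use pw_edge[OF jm] in blast)
    then show ?thesis using integ[OF iF] EF by simp
  qed
  have fam_chain: "real n * ((\<Sum>i=1..n-1. p_eq prob (J i) P) + p_neq prob (J n) P) \<le> real n * real n - (\<Sum>j=1..n. e j P)"
    if jm: "joint_meas outs prob coarse Mb J n" for J P
  proof -
    define F where "F l = (\<Sum>i=1..n-1. \<xi> (J i) 0 l + \<xi> (J i) 3 l) + (\<xi> (J n) 1 l + \<xi> (J n) 2 l)" for l
    have iF: "integrable (measure_pmf (\<mu> P)) F" unfolding F_def by (intro Bochner_Integration.integrable_sum Bochner_Integration.integrable_add ixi)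
    have EF: "measure_pmf.expectation (\<mu> P) F = (\<Sum>i=1..n-1. p_eq prob (J i) P) + p_neq prob (J n) P"
      unfolding F_def p_neq_def p_eq_def using ixi
      by (simp add: Bochner_Integration.integral_sum Bochner_Integration.integral_add pE enc_def)
    have "real n * F l \<le> real n * real n - D l" for l
    proof -
      have a: "\<forall>i\<in>{1..n-1}. \<xi> (J i) 0 l + \<xi> (J i) 3 l \<le> 1 - \<bar>c i l - c (Suc i) l\<bar>/2"
      proof
        fix i assume i: "i \<in> {1..n-1}"
        then have "i \<in> {1..n}" "nxt n i = Suc i" using n3 by (auto simp: nxt_lt)
        then show "\<xi> (J i) 0 l + \<xi> (J i) 3 l \<le> 1 - \<bar>c i l - c (Suc i) l\<bar>/2" using pw_edge[OF jm] by metis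
      qed
      have b: "\<xi> (J n) 1 l + \<xi> (J n) 2 l \<le> 1 - \<bar>c n l + c 1 l\<bar>/2"
        using pw_edge[OF jm, of n] n3 nxt_n[of n] by auto
      show ?thesis unfolding F_def D_def using chain_pt[OF _ a b] n3 by simp
    qed
    then show ?thesis using integ[OF iF] EF by simp
  qed
  have eta_eq: "eta prob (Mb j) P = \<bar>2 * prob (Mb j) 0 P - 1\<bar>" if j: "j \<in> {1..n}" for j P
  proof -
    have "prob (Mb j) 0 P + prob (Mb j) 1 P = 1" using osum[of "Mb j" P] binary j by simp
    then show ?thesis unfolding eta_def by (simp add: max_def abs_if)
  qed
  have eta_le: "eta prob (Mb j) P \<le> e j P" if j: "j \<in> {1..n}" for j P
  proof -
    have ic1: "integrable (measure_pmf (\<mu> P)) (\<lambda>l. c j l)" by (rule intb[where B=1]) (rule cab)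
    have "measure_pmf.expectation (\<mu> P) (\<lambda>l. c j l) = 2 * prob (Mb j) 0 P - 1"
      unfolding c_def pE using ixi by (simp add: Bochner_Integration.integral_diff)
    moreover have "\<bar>measure_pmf.expectation (\<mu> P) (\<lambda>l. c j l)\<bar> \<le> e j P"
      unfolding e_def using integral_norm_bound[of "measure_pmf (\<mu> P)" "c j"] by simp
    ultimately show ?thesis using eta_eq[OF j] by simp
  qed
  have e_le1: "e j P \<le> 1" for j P
  proof -
    have "e j P \<le> measure_pmf.expectation (\<mu> P) (\<lambda>l. 1)"
      unfolding e_def using ic cab by (intro integral_mono) auto
    then show ?thesis by simp
  qed
  have emix: "e j Ps + e j Psp = e j (Px j) + e j (Pxp j)" if j: "j \<in> {1..n}" for j
  proof -
    have eqmu: "\<mu> (mix (1/2) Ps Psp) = \<mu> (mix (1/2) (Px j) (Pxp j))"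
      using pnc prep j unfolding prep_nc_def by blast
    have h: "\<forall>l. pmf (\<mu> (mix (1/2) P Q)) l = 1/2 * pmf (\<mu> P) l + (1 - 1/2) * pmf (\<mu> Q) l" for P Q
      using pmix by simp
    have "e j (mix (1/2) P Q) = (e j P + e j Q)/2" for P Q
      unfolding e_def by (rule exp_mix[OF h cab2])
    then show ?thesis using eqmu unfolding e_def by (metis field_sum_of_halves)
  qed
  have S: "(\<Sum>j=1..n. e j Ps) + (\<Sum>j=1..n. e j Psp) \<ge> 2 * real n * eta_ave prob Mb Px Pxp n"
  proof -
    have "2 * real n * eta_ave prob Mb Px Pxp n = (\<Sum>i=1..n. eta prob (Mb i) (Px i) + eta prob (Mb i) (Pxp i))"
      unfolding eta_ave_def using n0 by simp
    also have "\<dots> \<le> (\<Sum>i=1..n. e i (Px i) + e i (Pxp i))"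
      by (intro sum_mono add_mono eta_le) auto
    also have "\<dots> = (\<Sum>i=1..n. e i Ps + e i Psp)" using emix by (intro sum.cong) auto
    finally show ?thesis by (simp add: sum.distrib)
  qed
  have Sle: "(\<Sum>j=1..n. e j Psp) \<le> real n"
  proof -
    have "(\<Sum>j=1..n. e j Psp) \<le> (\<Sum>j=1..n. 1)" by (intro sum_mono e_le1)
    then show ?thesis by simp
  qed
  have chn: "p_chained prob J n P = (1/real n) * ((\<Sum>i=1..n-1. p_eq prob (J i) P) + p_neq prob (J n) P)" for J P
    unfolding p_chained_def by (simp add: algebra_simps)
  show ?thesis
  proof (intro conjI impI)
    assume jm': "joint_meas outs prob coarse Mb Mj' n"
    {
      assume od: "odd n"
      show "p_anti prob Mj n Ps + p_anti prob Mj' n Psp \<le> 2 * (1 - eta_ave prob Mb Px Pxp n / real n)"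
        unfolding p_anti_def by (rule fin1[OF n0 fam_odd[OF jointM od] fam_odd[OF jm' od] S])
    }
    {
      assume "even n"
      show "p_chained prob Mj n Ps + p_chained prob Mj' n Psp \<le> 2 * (1 - eta_ave prob Mb Px Pxp n / real n)"
        unfolding chn by (rule fin1[OF n0 fam_chain[OF jointM] fam_chain[OF jm'] S])
    }
  next
    assume od: "odd n"
    show "p_anti prob Mj n Ps + p_anti prob Mj n Psp \<le> 2 * (1 - eta_ave prob Mb Px Pxp n / real n)"
      unfolding p_anti_def by (rule fin1[OF n0 fam_odd[OF jointM od] fam_odd[OF jointM od] S])
    show "p_anti prob Mj n Ps \<le> (real n - 1) / real n + 2 * (1 - eta_ave prob Mb Px Pxp n) / real n"
      unfolding p_anti_def by (rule fin2[OF n0 fam_odd[OF jointM od] S Sle])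
  next
    assume "even n"
    show "p_chained prob Mj n Ps + p_chained prob Mj n Psp \<le> 2 * (1 - eta_ave prob Mb Px Pxp n / real n)"
      unfolding chn by (rule fin1[OF n0 fam_chain[OF jointM] fam_chain[OF jointM] S])
    show "p_chained prob Mj n Ps \<le> (real n - 1) / real n + 2 * (1 - eta_ave prob Mb Px Pxp n) / real n"
      unfolding chn by (rule fin2[OF n0 fam_chain[OF jointM] S Sle])
  qed
qed

end
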